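(* Let $\mathfrak{A}$ be an atomic weakly associative relation algebra. Let $B=\{s\in{}^3\mathrm{At}(\mathfrak{A}): s_2;s_0\ge s_1\}$ and, for $\{\kappa,\lambda,\mu\}=\{0,1,2\}$, let $T_\kappa=\{\langle s,t\rangle\in B\times B:s_\kappa=t_\kappa\}$, $E_{\kappa\kappa}=B$, and $E_{\kappa\lambda}=E_{\lambda\kappa}=\{s\in B:s_\mu\le1'\}$. Then $\mathfrak{B}=\langle B,T_\kappa,E_{\kappa\lambda}\rangle_{\kappa,\lambda<3}$ is a suitable structure.
   Context: WA: algebras $\langle A,+,\overline{\phantom{x}},;,\breve{\phantom{x}},1'\rangle$ with $x\cdot y=\overline{\overline{x}+\overline{y}}$, $0'=\overline{1'}$, $1=1'+0'$, $0=\overline{1}$, satisfying for all $x,y,z$: $x+y=y+x$; $x+(y+z)=(x+y)+z$; $\overline{\overline{x}+\overline{y}}+\overline{\overline{x}+y}=x$; $((x\cdot 1');1);1=(x\cdot1');1$; $(x+y);z=x;z+y;z$; $x;1'=x$; $\breve{\breve{x}}=x$; $\breve{(x+y)}=\breve{x}+\breve{y}$; $\breve{(x;y)}=\breve{y};\breve{x}$; $\breve{x};\overline{x;y}+\overline{y}=\overline{y}$. $\mathrm{At}(\mathfrak{A})$ = set of atoms; triples are $s=\langle s_0,s_1,s_2\rangle$. A structure $\langle B,T_\kappa,E_{\kappa\lambda}\rangle_{\kappa,\lambda<\alpha}$ ($\alpha$ a nonzero ordinal) is a suitable structure if for all $\kappa,\lambda,\mu<\alpha$: (i) $T_\kappa\subseteq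 B\times B$ and $E_{\kappa\lambda}\subseteq B$; (ii) $T_\kappa$ is an equivalence relation on $B$; (iii) $E_{\kappa\kappa}=B$; (iv) $E_{\kappa\lambda}=T_\mu^*(E_{\kappa\mu}\cap E_{\mu\lambda})$ whenever $\kappa\ne\mu\ne\lambda$, where $T_\mu^*(X)=\{y:\exists x\in X\ \langle y,x\rangle\in T_\mu\}$; (v) $T_\kappa\cap(E_{\kappa\lambda}\times E_{\kappa\lambda})\subseteq Id$ (the identity relation) whenever $\kappa\ne\lambda$. *)

theory Defs
  imports Main
begin

text \<open>An algebra (A, +, -, ;, converse, 1') is given by its operations on a type 'a
  (the carrier is the whole type).  p = join, c = complement, r = relative product,
  v = converse, e = identity element 1'.\<close>

definition wa_meet :: "('a\<Rightarrow>'a\<Rightarrow>'a) \<Rightarrow> ('a\<Rightarrow>'a) \<Rightarrow> 'a \<Rightarrow> 'a \<Rightarrow> 'a" where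
  "wa_meet p c x y = c (p (c x) (c y))"

definition wa_diversity :: "('a\<Rightarrow>'a) \<Rightarrow> 'a \<Rightarrow> 'a" where
  "wa_diversity c e = c e"

definition wa_top :: "('a\<Rightarrow>'a\<Rightarrow>'a) \<Rightarrow> ('a\<Rightarrow>'a) \<Rightarrow> 'a \<Rightarrow> 'a" where
  "wa_top p c e = p e (wa_diversity c e)"

definition wa_zero :: "('a\<Rightarrow>'a\<Rightarrow>'a) \<Rightarrow> ('a\<Rightarrow>'a) \<Rightarrow> 'a \<Rightarrow> 'a" where
  "wa_zero p c e = c (wa_top p c e)"

definition wa_leq :: "('a\<Rightarrow>'a\<Rightarrow>'a) \<Rightarrow> 'a \<Rightarrow> 'a \<Rightarrow> bool" where
  "wa_leq p x y \<longleftrightarrow> p x y = y"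

definition WA :: "('a\<Rightarrow>'a\<Rightarrow>'a) \<Rightarrow> ('a\<Rightarrow>'a) \<Rightarrow> ('a\<Rightarrow>'a\<Rightarrow>'a) \<Rightarrow> ('a\<Rightarrow>'a) \<Rightarrow> 'a \<Rightarrow> bool" where
  "WA p c r v e \<longleftrightarrow>
     (\<forall>x y. p x y = p y x) \<and>
     (\<forall>x y z. p x (p y z) = p (p x y) z) \<and>
     (\<forall>x y. p (c (p (c x) (c y))) (c (p (c x) y)) = x) \<and>
     (\<forall>x. r (r (wa_meet p c x e) (wa_top p c e)) (wa_top p c e)
            = r (wa_meet p c x e) (wa_top p c e)) \<and>
     (\<forall>x y z. r (p x y) z = p (r x z) (r y z)) \<and>
     (\<forall>x. r x e = x) \<and>
     (\<forall>x. v (v x) = x) \<and>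
     (\<forall>x y. v (p x y) = p (v x) (v y)) \<and>
     (\<forall>x y. v (r x y) = r (v y) (v x)) \<and>
     (\<forall>x y. p (r (v x) (c (r x y))) (c y) = c y)"

definition wa_atom :: "('a\<Rightarrow>'a\<Rightarrow>'a) \<Rightarrow> ('a\<Rightarrow>'a) \<Rightarrow> 'a \<Rightarrow> 'a \<Rightarrow> bool" where
  "wa_atom p c e a \<longleftrightarrow> a \<noteq> wa_zero p c e \<and>
     (\<forall>y. wa_leq p y a \<longrightarrow> y = wa_zero p c e \<or> y = a)"

definition wa_atoms :: "('a\<Rightarrow>'a\<Rightarrow>'a) \<Rightarrow> ('a\<Rightarrow>'a) \<Rightarrow> 'a \<Rightarrow> 'a set" where
  "wa_atoms p c e = {a. wa_atom p c e a}"

definition wa_atomic :: "('a\<Rightarrow>'a\<Rightarrow>'a) \<Rightarrow> ('a\<Rightarrow>'a) \<Rightarrow> 'a \<Rightarrow> bool" where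
  "wa_atomic p c e \<longleftrightarrow>
     (\<forall>x. x \<noteq> wa_zero p c e \<longrightarrow> (\<exists>a. wa_atom p c e a \<and> wa_leq p a x))"

definition proj :: "nat \<Rightarrow> 'a \<times> 'a \<times> 'a \<Rightarrow> 'a" where
  "proj i s = (if i = 0 then fst s else if i = 1 then fst (snd s) else snd (snd s))"

definition wa_B :: "('a\<Rightarrow>'a\<Rightarrow>'a) \<Rightarrow> ('a\<Rightarrow>'a) \<Rightarrow> ('a\<Rightarrow>'a\<Rightarrow>'a) \<Rightarrow> 'a \<Rightarrow> ('a \<times> 'a \<times> 'a) set" where
  "wa_B p c r e = {s. proj 0 s \<in> wa_atoms p c e \<and> proj 1 s \<in> wa_atoms p c e \<and>
      proj 2 s \<in> wa_atoms p c e \<and> wa_leq p (proj 1 s) (r (proj 2 s) (proj 0 s))}"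

definition wa_T :: "('a\<Rightarrow>'a\<Rightarrow>'a) \<Rightarrow> ('a\<Rightarrow>'a) \<Rightarrow> ('a\<Rightarrow>'a\<Rightarrow>'a) \<Rightarrow> 'a \<Rightarrow> nat
    \<Rightarrow> (('a \<times> 'a \<times> 'a) \<times> ('a \<times> 'a \<times> 'a)) set" where
  "wa_T p c r e k = {(s, t). s \<in> wa_B p c r e \<and> t \<in> wa_B p c r e \<and> proj k s = proj k t}"

text \<open>For k \<noteq> l in {0,1,2}, the third index m is 3 - k - l.\<close>
definition wa_E :: "('a\<Rightarrow>'a\<Rightarrow>'a) \<Rightarrow> ('a\<Rightarrow>'a) \<Rightarrow> ('a\<Rightarrow>'a\<Rightarrow>'a) \<Rightarrow> 'a \<Rightarrow> nat \<Rightarrow> nat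
    \<Rightarrow> ('a \<times> 'a \<times> 'a) set" where
  "wa_E p c r e k l = (if k = l then wa_B p c r e
      else {s \<in> wa_B p c r e. wa_leq p (proj (3 - k - l) s) e})"

definition Tstar :: "('b \<times> 'b) set \<Rightarrow> 'b set \<Rightarrow> 'b set" where
  "Tstar R X = {y. \<exists>x\<in>X. (y, x) \<in> R}"

text \<open>Suitable structures, for a nonzero (here finite) ordinal \<alpha>.\<close>
definition suitable :: "nat \<Rightarrow> 'b set \<Rightarrow> (nat \<Rightarrow> ('b \<times> 'b) set) \<Rightarrow> (nat \<Rightarrow> nat \<Rightarrow> 'b set) \<Rightarrow> bool" where
  "suitable \<alpha> B T E \<longleftrightarrow> 0 < \<alpha> \<and>
     (\<forall>k<\<alpha>. \<forall>l<\<alpha>. T k \<subseteq> B \<times> B \<and> E k l \<subseteq> B) \<and>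
     (\<forall>k<\<alpha>. equiv B (T k)) \<and>
     (\<forall>k<\<alpha>. E k k = B) \<and>
     (\<forall>k<\<alpha>. \<forall>l<\<alpha>. \<forall>m<\<alpha>. k \<noteq> m \<and> m \<noteq> l \<longrightarrow>
        E k l = Tstar (T m) (E k m \<inter> E m l)) \<and>
     (\<forall>k<\<alpha>. \<forall>l<\<alpha>. k \<noteq> l \<longrightarrow> T k \<inter> (E k l \<times> E k l) \<subseteq> Id)"

end

theory Submission imports Defs begin
locale hunt =
  fixes p :: "'a\<Rightarrow>'a\<Rightarrow>'a" and c :: "'a\<Rightarrow>'a"
  assumes comm: "p x y = p y x" and assoc: "p x (p y z) = p (p x y) z"
  and H: "p (c (p (c x) (c y))) (c (p (c x) y)) = x"
begin
lemma lc: "p x (p y z) = p y (p x z)" by (metis assoc comm)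
lemma f3: "p a (c (p (c aa) a)) = p aa (c (p (c a) aa))"
proof -
  have f1: "\<forall>a aa. p (c (p (c aa) a)) (c (p (c aa) (c a))) = aa"
    by (metis (no_types) H comm)
  then have "\<forall>a aa. p (c (p aa (c a))) (c (p (c aa) (c a))) = a"
    by (metis comm)
  then have "\<forall>a aa. p (c (p aa (c a))) aa = p (c (p (c aa) a)) a"
    using f1 by (metis (no_types) lc)
  then show ?thesis
    by (simp add: comm)
qed
lemma one: "p x (c x) = p y (c y)"
proof -
  have f1: "\<forall>a aa. p (c (p (c aa) a)) (c (p (c aa) (c a))) = aa"
    by (metis (no_types) H comm)
  then have f2: "\<forall>a aa. p (c (p (c aa) a)) (c (p (c a) (c aa))) = aa"
    by (simp add: comm)
  then have f3: "\<forall>a aa. p a (c (p (c aa) a)) = p aa (c (p (c a) aa))"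
    using f3 by blast
  then have f4: "\<forall>a aa. p aa (p (c (p (c aa) a)) (c (p (c (c a)) aa))) = p (c a) aa"
    using f1 by (metis (no_types) lc)
  have f5: "\<forall>a aa ab. p (c (p a (c ab))) (p aa (c (p (c a) (c ab)))) = p aa ab"
    using f2 by (simp add: comm lc)
  have "\<forall>a aa. p (c (p a aa)) (c (p aa (c a))) = c aa"
    using f4 f2 by (metis (no_types) comm)
  then show ?thesis
    using f5 f3 f1 by (metis comm lc)
qed
lemma cc: "c (c x) = x" by (metis H comm one)
lemma zero: "p x (c (p y (c y))) = x"
proof -
  have f1: "\<forall>a aa. p (c (p aa (c a))) (c (p aa a)) = c aa"
    by (metis (full_types) H cc)
  then have "\<forall>a. p (c (p a (c a))) (c (p a (c a))) = c (p a (c a))"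
    by (metis (no_types) cc lc one)
  then have "\<forall>a. p (c (p a (c a))) (c a) = c a"
    using f1 by (metis lc)
  then show ?thesis
    using f1 by (metis (no_types) cc one)
qed
lemma idem0: "p (c x) (c x) = c x"
proof -
  have "p (c (p x (c x))) (c (p (c x) (c x))) = x" using H[of x "c x"] cc by (metis comm)
  hence "c (p (c x) (c x)) = x" using zero by (metis comm)
  hence "c (c (p (c x) (c x))) = c x" by simp
  thus ?thesis using cc by simp
qed
lemma idem: "p x x = x" using idem0[of "c x"] cc by simp
lemma top: "p x (p y (c y)) = p y (c y)"
  by (metis assoc idem one)

lemma le_refl: "wa_leq p x x" unfolding wa_leq_def by (rule idem)
lemma le_antisym: "wa_leq p x y \<Longrightarrow> wa_leq p y x \<Longrightarrow> x = y"
  unfolding wa_leq_def by (metis comm)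
lemma le_trans: "wa_leq p x y \<Longrightarrow> wa_leq p y z \<Longrightarrow> wa_leq p x z"
  unfolding wa_leq_def by (metis assoc)
lemma le_j1: "wa_leq p x (p x y)" unfolding wa_leq_def by (metis assoc idem)
lemma le_j2: "wa_leq p y (p x y)" unfolding wa_leq_def by (metis lc idem)
lemma j_lub: "wa_leq p x z \<Longrightarrow> wa_leq p y z \<Longrightarrow> wa_leq p (p x y) z"
  unfolding wa_leq_def by (metis assoc)
lemma c_anti: "wa_leq p x y \<Longrightarrow> wa_leq p (c y) (c x)"
proof -
  assume "wa_leq p x y"
  hence xy: "p x y = y" unfolding wa_leq_def .
  have "p (c (p x (c y))) (c (p x y)) = c x" using H[of "c x" y] cc by simp
  hence "p (c (p x y)) (c (p x (c y))) = c x" by (metis comm)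
  hence "wa_leq p (c (p x y)) (c x)" unfolding wa_leq_def by (metis assoc idem)
  thus ?thesis using xy by simp
qed
lemma c_le_iff: "wa_leq p (c x) (c y) \<longleftrightarrow> wa_leq p y x"
  by (metis c_anti cc)
lemma mt_lb1: "wa_leq p (wa_meet p c x y) x"
  unfolding wa_meet_def by (metis c_anti cc le_j1)
lemma mt_lb2: "wa_leq p (wa_meet p c x y) y"
  unfolding wa_meet_def by (metis c_anti cc le_j2)
lemma mt_glb: "wa_leq p z x \<Longrightarrow> wa_leq p z y \<Longrightarrow> wa_leq p z (wa_meet p c x y)"
  unfolding wa_meet_def by (metis c_anti cc j_lub)
lemma mt_comm: "wa_meet p c x y = wa_meet p c y x"
  unfolding wa_meet_def by (metis comm)
lemma le_mt: "wa_leq p x y \<Longrightarrow> wa_meet p c x y = x"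
  by (meson le_antisym le_refl mt_glb mt_lb1)
lemma mt_idem: "wa_meet p c x x = x"
  by (simp add: le_mt le_refl)
lemma bot: "wa_leq p (c (p y (c y))) x"
  unfolding wa_leq_def by (metis comm zero)
lemma topl: "wa_leq p x (p y (c y))"
  unfolding wa_leq_def by (metis top)
lemma le_bot: "wa_leq p x (c (p y (c y))) \<Longrightarrow> x = c (p y (c y))"
  using bot le_antisym by blast
lemma Hm: "p (wa_meet p c x y) (wa_meet p c x (c y)) = x"
  unfolding wa_meet_def using H[of x y] cc by simp
lemma mt_compl: "wa_meet p c x (c x) = c (p y (c y))"
  unfolding wa_meet_def using cc one by (metis comm)
lemma disj: "wa_meet p c x y = c (p u (c u)) \<Longrightarrow> wa_leq p x (c y)"
proof -
  assume a: "wa_meet p c x y = c (p u (c u))"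
  have "x = p (c (p u (c u))) (wa_meet p c x (c y))" using Hm[of x y] a by simp
  also have "\<dots> = wa_meet p c x (c y)" by (metis comm zero)
  finally show ?thesis by (metis mt_lb2)
qed
lemma mt_mono: "wa_leq p x x' \<Longrightarrow> wa_leq p y y' \<Longrightarrow> wa_leq p (wa_meet p c x y) (wa_meet p c x' y')"
  by (meson le_trans mt_glb mt_lb1 mt_lb2)
lemma disj2: "wa_leq p x (c y) \<Longrightarrow> wa_meet p c x y = c (p u (c u))"
  by (metis bot le_antisym le_refl mt_comm mt_compl mt_mono)
end

locale wal =
  fixes p :: "'a\<Rightarrow>'a\<Rightarrow>'a" and c :: "'a\<Rightarrow>'a" and r :: "'a\<Rightarrow>'a\<Rightarrow>'a"
    and v :: "'a\<Rightarrow>'a" and e :: 'a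
  assumes W: "WA p c r v e" and AT: "wa_atomic p c e"

sublocale wal \<subseteq> hunt p c
  using W unfolding WA_def hunt_def by blast

context wal
begin

abbreviation le where "le \<equiv> wa_leq p"
abbreviation mt where "mt \<equiv> wa_meet p c"
abbreviation T where "T \<equiv> wa_top p c e"
abbreviation Z where "Z \<equiv> wa_zero p c e"
abbreviation at where "at \<equiv> wa_atom p c e"

lemma wax: "r (r (wa_meet p c x e) (wa_top p c e)) (wa_top p c e)
            = r (wa_meet p c x e) (wa_top p c e)" using W unfolding WA_def by blast
lemma rdist: "r (p x y) z = p (r x z) (r y z)" using W unfolding WA_def by blast
lemma rid: "r x e = x" using W unfolding WA_def by blast
lemma vv: "v (v x) = x" using W unfolding WA_def by blast
lemma vp: "v (p x y) = p (v x) (v y)" using W unfolding WA_def by blast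
lemma vr: "v (r x y) = r (v y) (v x)" using W unfolding WA_def by blast
lemma sch: "p (r (v x) (c (r x y))) (c y) = c y" using W unfolding WA_def by blast

lemma Zdef: "Z = c (p e (c e))" unfolding wa_zero_def wa_top_def wa_diversity_def ..
lemma Tdef: "T = p e (c e)" unfolding wa_top_def wa_diversity_def ..
lemma botZ: "le Z x" unfolding Zdef by (rule bot)
lemma topT: "le x T" unfolding Tdef by (rule topl)
lemma leZ: "le x Z \<Longrightarrow> x = Z" by (simp add: botZ le_antisym)

lemma rmono_l: "le x y \<Longrightarrow> le (r x z) (r y z)"
  unfolding wa_leq_def by (metis rdist)
lemma rdist2: "r z (p x y) = p (r z x) (r z y)"
proof -
  have "v (r z (p x y)) = v (p (r z x) (r z y))"
    by (simp add: vr vp rdist)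
  hence "v (v (r z (p x y))) = v (v (p (r z x) (r z y)))" by simp
  thus ?thesis by (simp add: vv)
qed
lemma rmono_r: "le x y \<Longrightarrow> le (r z x) (r z y)"
  unfolding wa_leq_def by (metis rdist2)
lemma rmono: "le x x' \<Longrightarrow> le y y' \<Longrightarrow> le (r x y) (r x' y')"
  by (meson le_trans rmono_l rmono_r)
lemma vmono: "le x y \<Longrightarrow> le (v x) (v y)"
  unfolding wa_leq_def by (metis vp)
lemma vle_iff: "le (v x) (v y) \<longleftrightarrow> le x y"
  by (metis vmono vv)
lemma ve: "v e = e"
proof -
  have "v e = r (v e) e" by (simp add: rid)
  hence "v (v e) = v (r (v e) e)" by simp
  hence "e = r (v e) (v (v e))" by (simp add: vv vr)
  thus ?thesis by (simp add: vv rid)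
qed
lemma lid: "r e x = x"
proof -
  have "v (r e x) = v x" by (simp add: vr ve rid)
  hence "v (v (r e x)) = v (v x)" by simp
  thus ?thesis by (simp add: vv)
qed
lemma vZ: "v Z = Z"
proof -
  have "le Z (v Z)" by (rule botZ)
  hence "le (v Z) Z" using vmono vv by metis
  thus ?thesis by (rule leZ)
qed
lemma vZ_iff: "v x = Z \<longleftrightarrow> x = Z"
  by (metis vZ vv)
lemma v_mt: "le (v (mt x y)) (mt (v x) (v y))"
  by (simp add: mt_glb mt_lb1 mt_lb2 vmono)

lemma mtZ_le: "mt x y = Z \<longleftrightarrow> le x (c y)"
  using disj disj2 Zdef by metis

lemma schroeder: "mt (r x y) z = Z \<Longrightarrow> mt (r (v x) z) y = Z"
proof -
  assume "mt (r x y) z = Z"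
  hence "le z (c (r x y))" using mtZ_le mt_comm by metis
  hence "le (r (v x) z) (r (v x) (c (r x y)))" by (rule rmono_r)
  moreover have "le (r (v x) (c (r x y))) (c y)" unfolding wa_leq_def by (rule sch)
  ultimately have "le (r (v x) z) (c y)" by (rule le_trans)
  thus ?thesis using mtZ_le by blast
qed

abbreviation N where "N x y z \<equiv> mt (r x y) z \<noteq> Z"

lemma cyc1: "N x y z \<Longrightarrow> N (v x) z y"
  using schroeder[of "v x" z y] vv by metis
lemma cyc2: "N x y z \<Longrightarrow> N (v y) (v x) (v z)"
proof -
  assume "N x y z"
  hence "v (mt (r x y) z) \<noteq> Z" using vZ_iff by blast
  moreover have "le (v (mt (r x y) z)) (mt (r (v y) (v x)) (v z))"
    using v_mt vr by metis
  ultimately show ?thesis using leZ by metis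
qed
lemma cyc3: "N x y z \<Longrightarrow> N z (v y) x"
  by (metis cyc1 cyc2 vv)
lemma nz_mono: "mt x y \<noteq> Z \<Longrightarrow> le x x' \<Longrightarrow> le y y' \<Longrightarrow> mt x' y' \<noteq> Z"
  using leZ le_trans mt_mono by metis
lemma N_mono: "N x y z \<Longrightarrow> le x x' \<Longrightarrow> le y y' \<Longrightarrow> le z z' \<Longrightarrow> N x' y' z'"
  using nz_mono rmono by metis

lemma at_le: "at a \<Longrightarrow> le b a \<Longrightarrow> b \<noteq> Z \<Longrightarrow> b = a"
  unfolding wa_atom_def by blast
lemma at_nZ: "at a \<Longrightarrow> a \<noteq> Z"
  unfolding wa_atom_def by blast
lemma at_le_iff: "at a \<Longrightarrow> le a x \<longleftrightarrow> mt x a \<noteq> Z"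
  by (metis at_le at_nZ le_mt mt_comm mt_lb1)
lemma at_eq: "at a \<Longrightarrow> at b \<Longrightarrow> mt a b \<noteq> Z \<Longrightarrow> a = b"
  by (metis at_le mt_comm mt_lb1)
lemma at_v: "at a \<Longrightarrow> at (v a)"
  unfolding wa_atom_def by (metis vZ_iff vle_iff vv)
lemma atomic: "x \<noteq> Z \<Longrightarrow> \<exists>a. at a \<and> le a x"
  using AT unfolding wa_atomic_def by blast

lemma N_at: "at z \<Longrightarrow> N x y z \<longleftrightarrow> le z (r x y)"
  using at_le_iff by blast

abbreviation ida where "ida d \<equiv> at d \<and> le d e"

lemma LID: "ida d \<Longrightarrow> at a \<Longrightarrow> at b \<Longrightarrow> N d a b \<Longrightarrow> b = a"
proof -
  assume d: "ida d" and a: "at a" and b: "at b" and n: "N d a b"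
  have "le (r d a) (r e a)" using rmono_l d by blast
  hence "le (r d a) a" using lid by simp
  hence "mt a b \<noteq> Z" using nz_mono[OF n _ le_refl] by blast
  thus ?thesis using a b at_eq by metis
qed
lemma RID: "ida d \<Longrightarrow> at a \<Longrightarrow> at b \<Longrightarrow> N a d b \<Longrightarrow> b = a"
proof -
  assume d: "ida d" and a: "at a" and b: "at b" and n: "N a d b"
  have "le (r a d) (r a e)" using rmono_r d by blast
  hence "le (r a d) a" using rid by simp
  hence "mt a b \<noteq> Z" using nz_mono[OF n _ le_refl] by blast
  thus ?thesis using a b at_eq by metis
qed
lemma EXD: "at a \<Longrightarrow> \<exists>d. ida d \<and> N d a a"
proof -
  assume a: "at a"
  have "N e a a" using lid[of a] mt_idem[of a] a at_nZ by simp
  hence "N a (v a) e" by (rule cyc3)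
  then obtain d where d: "at d" "le d (mt (r a (v a)) e)" using atomic by blast
  have de: "le d e" using d(2) mt_lb2 le_trans by blast
  have "le d (r a (v a))" using d(2) mt_lb1 le_trans by blast
  hence "N a (v a) d" using N_at d(1) by blast
  hence "N d (v (v a)) a" by (rule cyc3)
  thus ?thesis using d(1) de vv by metis
qed
lemma ida_v: "ida d \<Longrightarrow> ida (v d)"
  using at_v vmono ve by metis
lemma EXR: "at a \<Longrightarrow> \<exists>d. ida d \<and> N a d a"
proof -
  assume a: "at a"
  obtain d where "ida d" "N d (v a) (v a)" using EXD at_v a by blast
  thus ?thesis using cyc2 ida_v vv by metis
qed
lemma EEE: "ida d \<Longrightarrow> N d d d"
proof -
  assume d: "ida d"
  obtain f where f: "ida f" "N f d d" using EXD d by blast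
  have "N f e d" using f(2) N_mono le_refl d by metis
  hence "mt f d \<noteq> Z" using rid by simp
  hence "f = d" using at_eq f(1) d by blast
  thus ?thesis using f by simp
qed
lemma CONVID: "ida d \<Longrightarrow> v d = d"
proof -
  assume d: "ida d"
  have "N (v d) d d" using EEE[OF d] cyc1 by blast
  hence "N (v d) e d" using N_mono le_refl d by metis
  hence "mt (v d) d \<noteq> Z" using rid by simp
  thus ?thesis using at_eq at_v d by blast
qed
lemma DOM: "ida d1 \<Longrightarrow> ida d2 \<Longrightarrow> at a \<Longrightarrow> N d1 a a \<Longrightarrow> N d2 a a \<Longrightarrow> d1 = d2"
proof -
  assume d1: "ida d1" and d2: "ida d2" and a: "at a" and n1: "N d1 a a" and n2: "N d2 a a"
  have m1: "mt d1 e = d1" using d1 le_mt by blast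
  have "le a (r d1 a)" using n1 N_at a by blast
  moreover have "le (r d1 a) (r d1 T)" using rmono_r topT by blast
  ultimately have aT: "le a (r d1 T)" by (rule le_trans)
  have "le (r a (v a)) (r (r d1 T) T)" using rmono aT topT by blast
  hence "le (r a (v a)) (r d1 T)" using wax[of d1] m1 by simp
  moreover have "N a (v a) d2" using cyc3[OF n2] .
  ultimately have "N d1 T d2" by (metis leZ le_refl le_trans mt_mono)
  hence "N (v d1) d2 T" by (rule cyc1)
  hence "N d1 d2 T" using CONVID d1 by simp
  hence nz: "r d1 d2 \<noteq> Z" using le_mt topT by metis
  have "le (r d1 d2) d1" using rmono_r[of d2 e d1] d2 rid by simp
  moreover have "le (r d1 d2) d2" using rmono_l[of d1 e d2] d1 lid by simp
  ultimately have "le (r d1 d2) (mt d1 d2)" by (rule mt_glb)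
  hence "mt d1 d2 \<noteq> Z" using nz leZ le_trans botZ by metis
  thus ?thesis using at_eq d1 d2 by blast
qed
lemma DOMR: "ida d1 \<Longrightarrow> ida d2 \<Longrightarrow> at a \<Longrightarrow> N a d1 a \<Longrightarrow> N a d2 a \<Longrightarrow> d1 = d2"
proof -
  assume d1: "ida d1" and d2: "ida d2" and a: "at a" and n1: "N a d1 a" and n2: "N a d2 a"
  have "N d1 (v a) (v a)" using cyc2[OF n1] CONVID d1 by simp
  moreover have "N d2 (v a) (v a)" using cyc2[OF n2] CONVID d2 by simp
  ultimately show ?thesis using DOM d1 d2 at_v a by blast
qed


abbreviation BB where "BB \<equiv> wa_B p c r e"

lemma B_iff: "(a,b,d) \<in> BB \<longleftrightarrow> at a \<and> at b \<and> at d \<and> N d a b"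
  unfolding wa_B_def wa_atoms_def proj_def using N_at by auto

lemma proj0[simp]: "proj 0 (a,b,d) = a" by (simp add: proj_def)
lemma proj1[simp]: "proj (Suc 0) (a,b,d) = b" by (simp add: proj_def)
lemma proj2[simp]: "proj 2 (a,b,d) = d" by (simp add: proj_def)

lemma lt3: "(k::nat) < 3 \<Longrightarrow> k = 0 \<or> k = 1 \<or> k = 2" by auto

lemma two_id: "t \<in> BB \<Longrightarrow> m < 3 \<Longrightarrow> (\<forall>i<3. i \<noteq> m \<longrightarrow> le (proj i t) e) \<Longrightarrow> le (proj m t) e"
proof -
  assume t: "t \<in> BB" and m: "m < 3" and h: "\<forall>i<3. i \<noteq> m \<longrightarrow> le (proj i t) e"
  obtain a b d where td: "t = (a,b,d)" by (cases t) auto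
  have ab: "at a" "at b" "at d" "N d a b" using t td B_iff by auto
  consider "m = 0" | "m = 1" | "m = 2" using m by linarith
  thus ?thesis
  proof cases
    case 1
    have "le b e" "le d e" using h td 1 by (auto dest: spec[of _ 1] spec[of _ 2])
    hence "b = a" using LID ab by blast
    thus ?thesis using 1 td \<open>le b e\<close> by simp
  next
    case 2
    have "le a e" "le d e" using h td 2 by (auto dest: spec[of _ 0] spec[of _ 2])
    hence "b = d" using RID ab by blast
    thus ?thesis using 2 td \<open>le d e\<close> by simp
  next
    case 3
    have "le a e" "le b e" using h td 3 by (auto dest: spec[of _ 0] spec[of _ 1])
    hence "b = d" using RID ab by blast
    thus ?thesis using 3 td \<open>le b e\<close> by simp
  qed
qed

lemma ddd: "ida d \<Longrightarrow> (d,d,d) \<in> BB"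
  using B_iff EEE by blast

lemma EXT: "s \<in> BB \<Longrightarrow> m < 3 \<Longrightarrow> j < 3 \<Longrightarrow> j \<noteq> m \<Longrightarrow>
    \<exists>t\<in>BB. proj m t = proj m s \<and> le (proj j t) e"
proof -
  assume s: "s \<in> BB" and m: "m < 3" and j: "j < 3" and jm: "j \<noteq> m"
  obtain a b d where sd: "s = (a,b,d)" by (cases s) auto
  have ab: "at a" "at b" "at d" using s sd B_iff by auto
  have X: "\<And>x. at x \<Longrightarrow> \<exists>t\<in>BB. proj 0 t = x \<and> le (proj 2 t) e"
  proof -
    fix x assume x: "at x"
    obtain f where "ida f" "N f x x" using EXD x by blast
    thus "\<exists>t\<in>BB. proj 0 t = x \<and> le (proj 2 t) e" using x B_iff[of x x f] by force
  qed
  have Y: "\<And>x. at x \<Longrightarrow> \<exists>t\<in>BB. proj 0 t = x \<and> le (proj 1 t) e"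
  proof -
    fix x assume x: "at x"
    obtain f where f: "ida f" "N f (v x) (v x)" using EXD at_v x by blast
    have "N (v x) x f" using cyc3[OF f(2)] vv by simp
    thus "\<exists>t\<in>BB. proj 0 t = x \<and> le (proj 1 t) e" using x f at_v B_iff[of x f "v x"] by force
  qed
  have X1: "\<And>x. at x \<Longrightarrow> \<exists>t\<in>BB. proj 1 t = x \<and> le (proj 2 t) e"
  proof -
    fix x assume x: "at x"
    obtain f where "ida f" "N f x x" using EXD x by blast
    thus "\<exists>t\<in>BB. proj 1 t = x \<and> le (proj 2 t) e" using x B_iff[of x x f] by force
  qed
  have Y1: "\<And>x. at x \<Longrightarrow> \<exists>t\<in>BB. proj 1 t = x \<and> le (proj 0 t) e"
  proof -
    fix x assume x: "at x"
    obtain f where "ida f" "N x f x" using EXR x by blast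
    thus "\<exists>t\<in>BB. proj 1 t = x \<and> le (proj 0 t) e" using x B_iff[of f x x] by force
  qed
  have X2: "\<And>x. at x \<Longrightarrow> \<exists>t\<in>BB. proj 2 t = x \<and> le (proj 0 t) e"
  proof -
    fix x assume x: "at x"
    obtain f where "ida f" "N x f x" using EXR x by blast
    thus "\<exists>t\<in>BB. proj 2 t = x \<and> le (proj 0 t) e" using x B_iff[of f x x] by force
  qed
  have Y2: "\<And>x. at x \<Longrightarrow> \<exists>t\<in>BB. proj 2 t = x \<and> le (proj 1 t) e"
  proof -
    fix x assume x: "at x"
    obtain f where f: "ida f" "N f x x" using EXD x by blast
    have "N x (v x) f" using cyc3[OF f(2)] .
    thus "\<exists>t\<in>BB. proj 2 t = x \<and> le (proj 1 t) e" using x f at_v B_iff[of "v x" f x] by force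
  qed
  have "(m = 0 \<and> j = 1) \<or> (m = 0 \<and> j = 2) \<or> (m = 1 \<and> j = 0) \<or> (m = 1 \<and> j = 2) \<or>
        (m = 2 \<and> j = 0) \<or> (m = 2 \<and> j = 1)" using m j jm by linarith
  thus ?thesis using X Y X1 Y1 X2 Y2 ab sd by (elim disjE) auto
qed

lemma UNI: "s \<in> BB \<Longrightarrow> t \<in> BB \<Longrightarrow> k < 3 \<Longrightarrow> m < 3 \<Longrightarrow> k \<noteq> m \<Longrightarrow> proj k s = proj k t \<Longrightarrow>
   le (proj m s) e \<Longrightarrow> le (proj m t) e \<Longrightarrow> s = t"
proof -
  assume s: "s \<in> BB" and t: "t \<in> BB" and k: "k < 3" and m: "m < 3" and km: "k \<noteq> m"
    and eq: "proj k s = proj k t" and ms: "le (proj m s) e" and mt': "le (proj m t) e"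
  obtain a b d where sd: "s = (a,b,d)" by (cases s) auto
  obtain a' b' d' where td: "t = (a',b',d')" by (cases t) auto
  have A: "at a" "at b" "at d" "N d a b" using s sd B_iff by auto
  have A': "at a'" "at b'" "at d'" "N d' a' b'" using t td B_iff by auto
  have "(k = 0 \<and> m = 1) \<or> (k = 0 \<and> m = 2) \<or> (k = 1 \<and> m = 0) \<or> (k = 1 \<and> m = 2) \<or>
        (k = 2 \<and> m = 0) \<or> (k = 2 \<and> m = 1)" using k m km by linarith
  thus ?thesis
  proof (elim disjE)
    assume h: "k = 0 \<and> m = 1"
    hence aa: "a' = a" and ib: "ida b" and ib': "ida b'" using eq ms mt' sd td A A' by auto
    have n1: "N b (v a) d" using cyc3[OF A(4)] .
    have dd: "d = v a" using LID[OF ib at_v[OF A(1)] A(3) n1] .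
    have n2: "N b' (v a) d'" using cyc3[OF A'(4)] aa by simp
    have dd': "d' = v a" using LID[OF ib' at_v[OF A(1)] A'(3) n2] .
    have "N b (v a) (v a)" using cyc3[OF A(4)] dd by simp
    moreover have "N b' (v a) (v a)" using cyc3[OF A'(4)] dd' aa by simp
    ultimately have "b = b'" using DOM[OF ib ib' at_v[OF A(1)]] by blast
    thus ?thesis using sd td aa dd dd' by simp
  next
    assume h: "k = 0 \<and> m = 2"
    hence aa: "a' = a" and ib: "ida d" and ib': "ida d'" using eq ms mt' sd td A A' by auto
    have bb: "b = a" using LID ib A by blast
    have bb': "b' = a" using LID ib' A' aa by blast
    have "d = d'" using DOM ib ib' A(1) A(4) A'(4) aa bb bb' by simp
    thus ?thesis using sd td aa bb bb' by simp
  next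
    assume h: "k = 1 \<and> m = 0"
    hence bb: "b' = b" and ib: "ida a" and ib': "ida a'" using eq ms mt' sd td A A' by auto
    have dd: "b = d" using RID ib A by blast
    have dd': "b' = d'" using RID ib' A' by blast
    have "a = a'" using DOMR ib ib' A(2) A(4) A'(4) bb dd dd' by simp
    thus ?thesis using sd td bb dd dd' by simp
  next
    assume h: "k = 1 \<and> m = 2"
    hence bb: "b' = b" and ib: "ida d" and ib': "ida d'" using eq ms mt' sd td A A' by auto
    have aa: "b = a" using LID ib A by blast
    have aa': "b' = a'" using LID ib' A' by blast
    have "d = d'" using DOM ib ib' A(1) A(4) A'(4) aa aa' bb by simp
    thus ?thesis using sd td aa aa' bb by simp
  next
    assume h: "k = 2 \<and> m = 0"
    hence dd: "d' = d" and ib: "ida a" and ib': "ida a'" using eq ms mt' sd td A A' by auto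
    have bb: "b = d" using RID ib A by blast
    have bb': "b' = d'" using RID ib' A' by blast
    have "a = a'" using DOMR ib ib' A(3) A(4) A'(4) bb bb' dd by simp
    thus ?thesis using sd td bb bb' dd by simp
  next
    assume h: "k = 2 \<and> m = 1"
    hence dd: "d' = d" and ib: "ida b" and ib': "ida b'" using eq ms mt' sd td A A' by auto
    have n1: "N (v d) b a" using cyc1[OF A(4)] .
    have aa: "a = v d" using RID[OF ib at_v[OF A(3)] A(1) n1] .
    have n2: "N (v d) b' a'" using cyc1[OF A'(4)] dd by simp
    have aa': "a' = v d" using RID[OF ib' at_v[OF A(3)] A'(1) n2] .
    have "N b d d" using cyc3[OF A(4)] aa vv by simp
    moreover have "N b' d d" using cyc3[OF A'(4)] aa' dd vv by simp
    ultimately have "b = b'" using DOM[OF ib ib' A(3)] by blast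
    thus ?thesis using sd td aa aa' dd by simp
  qed
qed


lemma proj_at: "s \<in> BB \<Longrightarrow> i < 3 \<Longrightarrow> at (proj i s)"
  unfolding wa_B_def wa_atoms_def using lt3 by auto
lemma proj_ddd: "proj i (d,d,d) = d" by (simp add: proj_def)

lemma E_ne: "k \<noteq> l \<Longrightarrow> wa_E p c r e k l = {s \<in> BB. le (proj (3 - k - l) s) e}"
  unfolding wa_E_def by simp

lemma cond_iv: "k < 3 \<Longrightarrow> l < 3 \<Longrightarrow> m < 3 \<Longrightarrow> k \<noteq> m \<Longrightarrow> m \<noteq> l \<Longrightarrow>
   wa_E p c r e k l = Tstar (wa_T p c r e m) (wa_E p c r e k m \<inter> wa_E p c r e m l)"
proof -
  assume k: "k < 3" and l: "l < 3" and m: "m < 3" and km: "k \<noteq> m" and ml: "m \<noteq> l"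
  show ?thesis
  proof (cases "k = l")
    case True
    have j: "3 - k - m < 3" "3 - k - m \<noteq> m" "3 - m - k = 3 - k - m" using lt3[OF k] lt3[OF m] km by auto
    have EE: "wa_E p c r e k m \<inter> wa_E p c r e m l = {s \<in> BB. le (proj (3 - k - m) s) e}"
      using E_ne[of k m] E_ne[of m k] km True j(3) by auto
    have "BB \<subseteq> Tstar (wa_T p c r e m) {s \<in> BB. le (proj (3 - k - m) s) e}"
    proof
      fix s assume s: "s \<in> BB"
      obtain t where t: "t \<in> BB" "proj m t = proj m s" "le (proj (3 - k - m) t) e"
        using EXT[OF s m j(1) j(2)] by blast
      have "(s,t) \<in> wa_T p c r e m" unfolding wa_T_def using s t by simp
      moreover have "t \<in> {s \<in> BB. le (proj (3 - k - m) s) e}" using t by simp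
      ultimately show "s \<in> Tstar (wa_T p c r e m) {s \<in> BB. le (proj (3 - k - m) s) e}"
        unfolding Tstar_def by blast
    qed
    moreover have "Tstar (wa_T p c r e m) X \<subseteq> BB" for X
      unfolding Tstar_def wa_T_def by auto
    ultimately show ?thesis using EE True unfolding wa_E_def by auto
  next
    case False
    have j: "3 - k - l = m" "3 - k - m = l" "3 - m - l = k" using lt3[OF k] lt3[OF m] lt3[OF l] km ml False by auto
    have EE: "wa_E p c r e k m \<inter> wa_E p c r e m l = {s \<in> BB. le (proj l s) e \<and> le (proj k s) e}"
      using E_ne[of k m] E_ne[of m l] km ml j by auto
    have El: "wa_E p c r e k l = {s \<in> BB. le (proj m s) e}" using E_ne[of k l] False j by simp
    have "wa_E p c r e k l \<subseteq> Tstar (wa_T p c r e m) {s \<in> BB. le (proj l s) e \<and> le (proj k s) e}"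
    proof
      fix s assume "s \<in> wa_E p c r e k l"
      hence s: "s \<in> BB" "le (proj m s) e" using El by auto
      define d where "d = proj m s"
      have "ida d" using s proj_at m d_def by blast
      hence dB: "(d,d,d) \<in> BB" by (rule ddd)
      have "(s,(d,d,d)) \<in> wa_T p c r e m" unfolding wa_T_def using s(1) dB proj_ddd[of m d] d_def by auto
      moreover have "(d,d,d) \<in> {s \<in> BB. le (proj l s) e \<and> le (proj k s) e}"
        using dB \<open>ida d\<close> proj_ddd[of l d] proj_ddd[of k d] by simp
      ultimately show "s \<in> Tstar (wa_T p c r e m) {s \<in> BB. le (proj l s) e \<and> le (proj k s) e}"
        unfolding Tstar_def by blast
    qed
    moreover have "Tstar (wa_T p c r e m) {s \<in> BB. le (proj l s) e \<and> le (proj k s) e} \<subseteq> wa_E p c r e k l"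
    proof
      fix s assume "s \<in> Tstar (wa_T p c r e m) {s \<in> BB. le (proj l s) e \<and> le (proj k s) e}"
      then obtain t where t: "t \<in> BB" "le (proj l t) e" "le (proj k t) e" and st: "(s,t) \<in> wa_T p c r e m"
        unfolding Tstar_def by auto
      have "\<forall>i<3. i \<noteq> m \<longrightarrow> le (proj i t) e"
      proof (intro allI impI)
        fix i assume "i < 3" "i \<noteq> m"
        hence "i = k \<or> i = l" using lt3[OF k] lt3[OF m] lt3[OF l] lt3[OF \<open>i<3\<close>] km ml False by auto
        thus "le (proj i t) e" using t by auto
      qed
      hence "le (proj m t) e" using two_id t(1) m by blast
      thus "s \<in> wa_E p c r e k l" using st El unfolding wa_T_def by auto
    qed
    ultimately show ?thesis using EE by auto
  qed
qed

lemma cond_v: "k < 3 \<Longrightarrow> l < 3 \<Longrightarrow> k \<noteq> l \<Longrightarrow>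
   wa_T p c r e k \<inter> (wa_E p c r e k l \<times> wa_E p c r e k l) \<subseteq> Id"
proof
  fix x assume k: "k < 3" and l: "l < 3" and kl: "k \<noteq> l"
    and x: "x \<in> wa_T p c r e k \<inter> (wa_E p c r e k l \<times> wa_E p c r e k l)"
  obtain s t where xst: "x = (s,t)" by (cases x) auto
  have m: "3 - k - l < 3" "k \<noteq> 3 - k - l" using lt3[OF k] lt3[OF l] kl by auto
  have "s \<in> BB" "t \<in> BB" "proj k s = proj k t" "le (proj (3-k-l) s) e" "le (proj (3-k-l) t) e"
    using x xst E_ne[OF kl] unfolding wa_T_def by auto
  hence "s = t" using UNI k m by blast
  thus "x \<in> Id" using xst by simp
qed

lemma suit: "suitable 3 BB (wa_T p c r e) (wa_E p c r e)"
  unfolding suitable_def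
proof (intro conjI allI impI)
  show "(0::nat) < 3" by simp
  fix k l :: nat assume "k < 3" "l < 3"
  show "wa_T p c r e k \<subseteq> BB \<times> BB" unfolding wa_T_def by auto
  show "wa_E p c r e k l \<subseteq> BB" unfolding wa_E_def by auto
next
  fix k :: nat assume "k < 3"
  show "equiv BB (wa_T p c r e k)"
    by (auto simp: equiv_def refl_on_def sym_def trans_def wa_T_def)
next
  fix k :: nat assume "k < 3"
  show "wa_E p c r e k k = BB" unfolding wa_E_def by simp
next
  fix k l m :: nat assume "k < 3" "l < 3" "m < 3" "k \<noteq> m \<and> m \<noteq> l"
  thus "wa_E p c r e k l = Tstar (wa_T p c r e m) (wa_E p c r e k m \<inter> wa_E p c r e m l)"
    using cond_iv by blast
next
  fix k l :: nat assume "k < 3" "l < 3" "k \<noteq> l"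
  thus "wa_T p c r e k \<inter> (wa_E p c r e k l \<times> wa_E p c r e k l) \<subseteq> Id"
    using cond_v by blast
qed

end

theorem lemma4:
  fixes p :: "'a \<Rightarrow> 'a \<Rightarrow> 'a" and c :: "'a \<Rightarrow> 'a" and r :: "'a \<Rightarrow> 'a \<Rightarrow> 'a"
    and v :: "'a \<Rightarrow> 'a" and e :: 'a
  assumes "WA p c r v e" and "wa_atomic p c e"
  shows "suitable 3 (wa_B p c r e) (wa_T p c r e) (wa_E p c r e)"
proof -
  interpret wal p c r v e using assms by (unfold_locales)
  show ?thesis by (rule suit)
qed

end
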